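(* Let $K\subset\mathbb{R}^m$ be a convex cone containing the nonnegative orthant $\mathbb{R}^m_+$. For $i\in[m]$ let $C_i=\{c\in K: c_j\ge 0\ \forall j\ne i\}$ and let $C=\sum_{i=1}^m C_i$ (Minkowski sum). Then a vector $c\in\mathbb{R}^m$ having at least one negative entry belongs to $C$ if and only if $c\in\sum_{i: c_i<0} C_i$. *)

theory Defs
  imports "HOL-Analysis.Analysis"
begin

definition msum :: "'i set \<Rightarrow> ('i \<Rightarrow> 'a::comm_monoid_add set) \<Rightarrow> 'a set" where
  "msum I S = {(\<Sum>i\<in>I. x i) | x. \<forall>i\<in>I. x i \<in> S i}"

definition Cset :: "(real ^ 'm) set \<Rightarrow> 'm \<Rightarrow> (real ^ 'm) set" where
  "Cset K i = {c \<in> K. \<forall>j. j \<noteq> i \<longrightarrow> c $ j \<ge> 0}"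

end

theory Submission
  imports Defs
begin

lemma step:
  fixes K :: "(real ^ 'm) set" and x :: "'m \<Rightarrow> real ^ 'm"
  assumes K: "convex_cone K"
    and S: "finite S" "j \<in> S" "i0 \<in> S" "i0 \<noteq> j"
    and x: "\<forall>k\<in>S. x k \<in> Cset K k"
    and cj: "(\<Sum>k\<in>S. x k) $ j \<ge> 0"
  shows "\<exists>y. (\<forall>k\<in>S - {j}. y k \<in> Cset K k) \<and> (\<Sum>k\<in>S - {j}. y k) = (\<Sum>k\<in>S. x k)"
proof -
  define T where "T = S - {j}"
  have fT: "finite T" using S T_def by auto
  have split: "(\<Sum>k\<in>S. x k) = x j + (\<Sum>k\<in>T. x k)"
    using S T_def by (simp add: sum.remove)
  have xT: "\<And>k. k \<in> T \<Longrightarrow> x k \<in> K \<and> (\<forall>l. l \<noteq> k \<longrightarrow> x k $ l \<ge> 0)"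
    using x T_def by (auto simp: Cset_def)
  have xj: "x j \<in> K" "\<And>l. l \<noteq> j \<Longrightarrow> x j $ l \<ge> 0"
    using x S by (auto simp: Cset_def)
  have nnT: "\<And>k'. k' \<in> T \<Longrightarrow> x k' $ j \<ge> 0" using xT T_def by auto
  show ?thesis
  proof (cases "x j $ j < 0")
    case True
    define \<sigma> where "\<sigma> = (\<Sum>k\<in>T. x k $ j)"
    have "\<sigma> + x j $ j \<ge> 0" using cj split by (simp add: \<sigma>_def)
    hence sp: "\<sigma> > 0" using True by linarith
    define y where "y k = x k + (x k $ j / \<sigma>) *\<^sub>R x j" for k
    have "\<forall>k\<in>T. y k \<in> Cset K k"
    proof
      fix k assume k: "k \<in> T"
      have kj: "k \<noteq> j" using k T_def by auto
      have nn: "x k $ j \<ge> 0" using xT[OF k] kj by auto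
      have "y k \<in> K" unfolding y_def
        by (intro convex_cone_add[OF K] convex_cone_scaleR[OF K]) (use xT[OF k] xj nn sp in auto)
      moreover have "y k $ l \<ge> 0" if "l \<noteq> k" for l
      proof (cases "l = j")
        case True
        have "x k $ j / \<sigma> * x j $ j \<ge> - x k $ j"
        proof -
          have "x k $ j \<le> \<sigma>" unfolding \<sigma>_def
            using fT k nnT by (intro member_le_sum) auto
          hence "x k $ j / \<sigma> \<le> 1" using sp by simp
          moreover have "x k $ j / \<sigma> \<ge> 0" using nn sp by simp
          moreover have "- x j $ j \<le> -\<sigma> * 0 + \<sigma> + x j $ j - x j $ j" using \<open>\<sigma> + x j $ j \<ge> 0\<close> by simp
          ultimately have "x k $ j / \<sigma> * (- x j $ j) \<le> x k $ j / \<sigma> * \<sigma>"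
            using \<open>\<sigma> + x j $ j \<ge> 0\<close> by (intro mult_left_mono) auto
          thus ?thesis using sp by simp
        qed
        thus ?thesis using True by (simp add: y_def)
      next
        case False
        thus ?thesis using xT[OF k] xj(2)[OF False] that nn sp by (simp add: y_def)
      qed
      ultimately show "y k \<in> Cset K k" by (simp add: Cset_def)
    qed
    moreover have "(\<Sum>k\<in>T. y k) = (\<Sum>k\<in>S. x k)"
    proof -
      have "(\<Sum>k\<in>T. y k) = (\<Sum>k\<in>T. x k) + (\<Sum>k\<in>T. (x k $ j / \<sigma>) *\<^sub>R x j)"
        by (simp add: y_def sum.distrib)
      also have "(\<Sum>k\<in>T. (x k $ j / \<sigma>) *\<^sub>R x j) = ((\<Sum>k\<in>T. x k $ j) / \<sigma>) *\<^sub>R x j"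
        by (simp add: scaleR_sum_left sum_divide_distrib)
      also have "\<dots> = x j" using sp by (simp add: \<sigma>_def[symmetric])
      finally show ?thesis using split by simp
    qed
    ultimately show ?thesis unfolding T_def by blast
  next
    case False
    define y where "y = x(i0 := x i0 + x j)"
    have i0T: "i0 \<in> T" using S T_def by auto
    have "\<forall>k\<in>T. y k \<in> Cset K k"
    proof
      fix k assume k: "k \<in> T"
      show "y k \<in> Cset K k"
      proof (cases "k = i0")
        case True
        have "x i0 + x j \<in> K" using convex_cone_add[OF K] xT[OF i0T] xj by auto
        moreover have "(x i0 + x j) $ l \<ge> 0" if "l \<noteq> i0" for l
          using xT[OF i0T] that xj(2)[of l] False by (cases "l = j") auto
        ultimately show ?thesis using True by (simp add: y_def Cset_def)
      next
        case False
        thus ?thesis using xT[OF k] by (simp add: y_def Cset_def)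
      qed
    qed
    moreover have "(\<Sum>k\<in>T. y k) = (\<Sum>k\<in>S. x k)"
    proof -
      have "(\<Sum>k\<in>T. y k) = y i0 + (\<Sum>k\<in>T - {i0}. y k)" using fT i0T by (simp add: sum.remove)
      also have "(\<Sum>k\<in>T - {i0}. y k) = (\<Sum>k\<in>T - {i0}. x k)" by (intro sum.cong) (auto simp: y_def)
      also have "y i0 + \<dots> = x j + (x i0 + (\<Sum>k\<in>T - {i0}. x k))" by (simp add: y_def algebra_simps)
      also have "x i0 + (\<Sum>k\<in>T - {i0}. x k) = (\<Sum>k\<in>T. x k)" using fT i0T by (simp add: sum.remove)
      finally show ?thesis using split by simp
    qed
    ultimately show ?thesis unfolding T_def by blast
  qed
qed

lemma reduce:
  fixes K :: "(real ^ 'm) set" and c :: "real ^ 'm"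
  assumes K: "convex_cone K" and I: "I = {i. c $ i < 0}" "I \<noteq> {}"
  shows "\<And>S x. card (S - I) = n \<Longrightarrow> finite S \<Longrightarrow> I \<subseteq> S \<Longrightarrow> (\<forall>k\<in>S. x k \<in> Cset K k)
     \<Longrightarrow> (\<Sum>k\<in>S. x k) = c \<Longrightarrow> c \<in> msum I (Cset K)"
proof (induction n)
  case 0
  hence "S = I" by auto
  thus ?case using 0 unfolding msum_def by blast
next
  case (Suc n S x)
  have "S - I \<noteq> {}" using Suc.prems(1) by (metis card.empty nat.distinct(1))
  then obtain j where j: "j \<in> S - I" by blast
  obtain i0 where i0: "i0 \<in> I" using I by auto
  have "(\<Sum>k\<in>S. x k) $ j \<ge> 0" using j I Suc.prems by auto
  then obtain y where y: "\<forall>k\<in>S - {j}. y k \<in> Cset K k" "(\<Sum>k\<in>S - {j}. y k) = (\<Sum>k\<in>S. x k)"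
    using step[OF K Suc.prems(2), of j i0 x] j i0 Suc.prems by auto
  have "card ((S - {j}) - I) = n"
  proof -
    have "(S - {j}) - I = (S - I) - {j}" by auto
    thus ?thesis using Suc.prems j by simp
  qed
  thus ?case using Suc.IH[of "S - {j}" y] Suc.prems y j by auto
qed

theorem mainTheorem5:
  fixes K :: "(real ^ 'm) set" and c :: "real ^ 'm"
  assumes "convex_cone K"
    and "{x. \<forall>j. x $ j \<ge> 0} \<subseteq> K"
    and "\<exists>i. c $ i < 0"
  shows "c \<in> msum UNIV (Cset K) \<longleftrightarrow> c \<in> msum {i. c $ i < 0} (Cset K)"
proof
  assume "c \<in> msum UNIV (Cset K)"
  then obtain x where x: "\<forall>k. x k \<in> Cset K k" "c = (\<Sum>k\<in>UNIV. x k)"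
    unfolding msum_def by auto
  have ne: "{i. c $ i < 0} \<noteq> {}" using assms(3) by auto
  have all: "\<forall>k\<in>UNIV. x k \<in> Cset K k" using x(1) by simp
  have fin: "finite (UNIV::'m set)" by simp
  have sub: "{i. c $ i < 0} \<subseteq> UNIV" by simp
  show "c \<in> msum {i. c $ i < 0} (Cset K)"
    by (rule reduce[OF assms(1) refl ne refl fin sub all x(2)[symmetric]])
next
  assume "c \<in> msum {i. c $ i < 0} (Cset K)"
  then obtain x where x: "\<forall>k\<in>{i. c $ i < 0}. x k \<in> Cset K k" "c = (\<Sum>k\<in>{i. c $ i < 0}. x k)"
    unfolding msum_def by auto
  define y where "y k = (if k \<in> {i. c $ i < 0} then x k else 0)" for k
  have "0 \<in> Cset K k" for k using assms(2) by (auto simp: Cset_def)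
  hence "\<forall>k. y k \<in> Cset K k" using x(1) by (simp add: y_def)
  moreover have "(\<Sum>k\<in>UNIV. y k) = (\<Sum>k\<in>{i. c $ i < 0}. x k)"
    by (rule sum.mono_neutral_cong_right) (auto simp: y_def)
  ultimately show "c \<in> msum UNIV (Cset K)" unfolding msum_def x(2)[symmetric] by blast
qed

end
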